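(* Let $x^*$, $\Delta x$, $S^k$, $L_{s,k}f$, $\beta_k$ and $\zeta$ be as defined in the context, with $f\in C^4(I)$ on an open interval $I$ containing all stencil points for small $\Delta x$. Let $d_0=\frac{1}{35}$, $d_1=\frac{12}{35}$, $d_2=\frac{18}{35}$, $d_3=\frac{4}{35}$, let $s\geq 1$ be an integer, and (taking $\epsilon=0$) define the nonlinear weights $$\omega_k=\frac{\alpha_k}{\sum_{q=0}^3\alpha_q},\qquad \alpha_k=d_k\left[1+\left(\frac{\zeta}{\beta_k^2}\right)^{s}\right],\qquad k=0,1,2,3.$$ Then, as $\Delta x\to 0$ (for $\Delta x$ small enough that all $\beta_k>0$ in the cases below): (i) if $f'(x^* )\neq 0$, then $\omega_k=d_k+O(\Delta x^{6s})$; (ii) if $f'(x^* )=0$ and $f''(x^* )\neq0$, then $\omega_k=d_k+O(\Delta x^{4s})$; (iii) if $f'(x^* )=f''(x^* )=0$ and $f'''(x^* )\neq 0$, then $\omega_k=d_k+O(\Delta x^{2s})$. Consequently the condition $\omega_k-d_k=O(\Delta x^4)$ for $k=0,1,2,3$ holds for every $s\ge1$ in cases (i) and (ii), and for every $s\geq 2$ in case (iii).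
   Context: Setup: $x^*\in\mathbb{R}$, $\Delta x>0$, $S^k=\{x^*+(k+i-\tfrac{7}{2})\Delta x : i=0,1,2,3\}$ for $k=0,1,2,3$ (the four 4-point sub-stencils $\{x_{j+k-3},\dots,x_{j+k}\}$ of a uniform grid, with $x^*=x_{j+\frac12}$). For $s'\in\{1,2,3\}$, $L_{s',k}f:=\sum_{x_l\in S^k}c^{[s']}_{k,l}f(x_l)$ where the coefficients uniquely solve $\sum_{x_l\in S^k}c^{[s']}_{k,l}\frac{(x_l-x^* )^m}{m!}=\Delta x^{s'}\delta_{s',m}$ for $m=0,1,2,3$. With fixed parameters $\xi_1,\xi_2\in(0,1]$, $\beta_k=\xi_1|L_{1,k}f|+\xi_2|L_{2,k}f|+|L_{3,k}f|$ and $\zeta=|\beta_0-\beta_3|^2$. The numbers $d_k$ are the ideal (linear) weights of the seventh-order upstream central reconstruction. *)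

theory Defs
  imports "HOL-Analysis.Analysis" "HOL-Library.Landau_Symbols"
begin

definition stencil_pt :: "real \<Rightarrow> real \<Rightarrow> nat \<Rightarrow> nat \<Rightarrow> real" where
  "stencil_pt xs dx k i = xs + (real k + real i - 7/2) * dx"

definition stencil_coef :: "real \<Rightarrow> real \<Rightarrow> nat \<Rightarrow> nat \<Rightarrow> nat \<Rightarrow> real" where
  "stencil_coef xs dx s k = (THE c. (\<forall>i\<ge>4. c i = 0) \<and>
     (\<forall>m<4. (\<Sum>i<4. c i * (stencil_pt xs dx k i - xs) ^ m / fact m)
              = dx ^ s * (if s = m then 1 else 0)))"

definition Lop :: "real \<Rightarrow> real \<Rightarrow> nat \<Rightarrow> nat \<Rightarrow> (real \<Rightarrow> real) \<Rightarrow> real" where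
  "Lop xs dx s k f = (\<Sum>i<4. stencil_coef xs dx s k i * f (stencil_pt xs dx k i))"

definition beta_ind :: "real \<Rightarrow> real \<Rightarrow> real \<Rightarrow> real \<Rightarrow> (real \<Rightarrow> real) \<Rightarrow> nat \<Rightarrow> real" where
  "beta_ind xi1 xi2 xs dx f k =
     xi1 * \<bar>Lop xs dx 1 k f\<bar> + xi2 * \<bar>Lop xs dx 2 k f\<bar> + \<bar>Lop xs dx 3 k f\<bar>"

definition zeta_ind :: "real \<Rightarrow> real \<Rightarrow> real \<Rightarrow> real \<Rightarrow> (real \<Rightarrow> real) \<Rightarrow> real" where
  "zeta_ind xi1 xi2 xs dx f = \<bar>beta_ind xi1 xi2 xs dx f 0 - beta_ind xi1 xi2 xs dx f 3\<bar> ^ 2"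

definition dw :: "nat \<Rightarrow> real" where
  "dw k = (if k = 0 then 1/35 else if k = 1 then 12/35 else if k = 2 then 18/35 else 4/35)"

definition alpha_w :: "nat \<Rightarrow> real \<Rightarrow> real \<Rightarrow> real \<Rightarrow> real \<Rightarrow> (real \<Rightarrow> real) \<Rightarrow> nat \<Rightarrow> real" where
  "alpha_w s xi1 xi2 xs dx f k =
     dw k * (1 + (zeta_ind xi1 xi2 xs dx f / (beta_ind xi1 xi2 xs dx f k) ^ 2) ^ s)"

definition omega_w :: "nat \<Rightarrow> real \<Rightarrow> real \<Rightarrow> real \<Rightarrow> real \<Rightarrow> (real \<Rightarrow> real) \<Rightarrow> nat \<Rightarrow> real" where
  "omega_w s xi1 xi2 xs dx f k =
     alpha_w s xi1 xi2 xs dx f k / (\<Sum>q<4. alpha_w s xi1 xi2 xs dx f q)"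

end

theory Submission
  imports Defs
begin

definition tab :: "real list list list" where
 "tab = [[[-23/24, 31/8, -47/8, 71/24],[1/24, -1/8, -7/8, 23/24],[1/24, -9/8, 9/8, -1/24],[-23/24, 7/8, 1/8, -1/24]],
         [[-3/2, 11/2, -13/2, 5/2],[-1/2, 5/2, -7/2, 3/2],[1/2, -1/2, -1/2, 1/2],[3/2, -7/2, 5/2, -1/2]],
         [[-1, 3, -3, 1],[-1, 3, -3, 1],[-1, 3, -3, 1],[-1, 3, -3, 1]]]"

definition gt :: "nat \<Rightarrow> nat \<Rightarrow> nat \<Rightarrow> real" where
 "gt s k i = (if i < 4 then tab ! (s - 1) ! k ! i else 0)"

lemma sum4: "(\<Sum>i<4::nat. g i) = g 0 + g 1 + g 2 + (g 3 :: real)"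
  by (simp add: eval_nat_numeral)

lemma aux_div: "(a::real) > 0 \<Longrightarrow> f > 0 \<Longrightarrow> (a * X / f = a) = (X = f)"
  by (auto simp: field_simps)
lemma aux_div0: "(a::real) > 0 \<Longrightarrow> f > 0 \<Longrightarrow> (a * X / f = 0) = (X = 0)"
  by (auto simp: field_simps)

lemma norm_eq:
  assumes "dx > 0"
  shows "((\<Sum>i<4. c i * (stencil_pt xs dx k i - xs)^m / fact m) = dx^s*(if s=m then 1 else 0))
     \<longleftrightarrow> ((\<Sum>i<4. c i * (real k + real i - 7/2)^m) = (if s=m then fact m else 0))"
proof -
  define X where "X = (\<Sum>i<4. c i * (real k + real i - 7/2)^m)"
  have L: "(\<Sum>i<4. c i * (stencil_pt xs dx k i - xs)^m / fact m) = dx^m * X / fact m"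
    unfolding X_def
    by (simp add: stencil_pt_def sum_distrib_left power_mult_distrib sum_divide_distrib mult_ac)
  have p: "dx^m > 0" using assms by simp
  have q: "(fact m :: real) > 0" by simp
  show ?thesis
  proof (cases "s = m")
    case True
    show ?thesis unfolding L X_def[symmetric] True by (simp only: if_P[OF refl] mult_1_right aux_div[OF p q])
  next
    case False
    show ?thesis unfolding L X_def[symmetric] by (simp only: if_not_P[OF False] mult_zero_right aux_div0[OF p q])
  qed
qed

lemma gt_vals:
  "gt 1 0 0 = -23/24"
  "gt (Suc 0) 0 0 = -23/24"
  "gt 1 0 1 = 31/8"
  "gt 1 0 (Suc 0) = 31/8"
  "gt (Suc 0) 0 1 = 31/8"
  "gt (Suc 0) 0 (Suc 0) = 31/8"
  "gt 1 0 2 = -47/8"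
  "gt (Suc 0) 0 2 = -47/8"
  "gt 1 0 3 = 71/24"
  "gt (Suc 0) 0 3 = 71/24"
  "gt 1 1 0 = 1/24"
  "gt 1 (Suc 0) 0 = 1/24"
  "gt (Suc 0) 1 0 = 1/24"
  "gt (Suc 0) (Suc 0) 0 = 1/24"
  "gt 1 1 1 = -1/8"
  "gt 1 1 (Suc 0) = -1/8"
  "gt 1 (Suc 0) 1 = -1/8"
  "gt 1 (Suc 0) (Suc 0) = -1/8"
  "gt (Suc 0) 1 1 = -1/8"
  "gt (Suc 0) 1 (Suc 0) = -1/8"
  "gt (Suc 0) (Suc 0) 1 = -1/8"
  "gt (Suc 0) (Suc 0) (Suc 0) = -1/8"
  "gt 1 1 2 = -7/8"
  "gt 1 (Suc 0) 2 = -7/8"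
  "gt (Suc 0) 1 2 = -7/8"
  "gt (Suc 0) (Suc 0) 2 = -7/8"
  "gt 1 1 3 = 23/24"
  "gt 1 (Suc 0) 3 = 23/24"
  "gt (Suc 0) 1 3 = 23/24"
  "gt (Suc 0) (Suc 0) 3 = 23/24"
  "gt 1 2 0 = 1/24"
  "gt (Suc 0) 2 0 = 1/24"
  "gt 1 2 1 = -9/8"
  "gt 1 2 (Suc 0) = -9/8"
  "gt (Suc 0) 2 1 = -9/8"
  "gt (Suc 0) 2 (Suc 0) = -9/8"
  "gt 1 2 2 = 9/8"
  "gt (Suc 0) 2 2 = 9/8"
  "gt 1 2 3 = -1/24"
  "gt (Suc 0) 2 3 = -1/24"
  "gt 1 3 0 = -23/24"
  "gt (Suc 0) 3 0 = -23/24"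
  "gt 1 3 1 = 7/8"
  "gt 1 3 (Suc 0) = 7/8"
  "gt (Suc 0) 3 1 = 7/8"
  "gt (Suc 0) 3 (Suc 0) = 7/8"
  "gt 1 3 2 = 1/8"
  "gt (Suc 0) 3 2 = 1/8"
  "gt 1 3 3 = -1/24"
  "gt (Suc 0) 3 3 = -1/24"
  "gt 2 0 0 = -3/2"
  "gt 2 0 1 = 11/2"
  "gt 2 0 (Suc 0) = 11/2"
  "gt 2 0 2 = -13/2"
  "gt 2 0 3 = 5/2"
  "gt 2 1 0 = -1/2"
  "gt 2 (Suc 0) 0 = -1/2"
  "gt 2 1 1 = 5/2"
  "gt 2 1 (Suc 0) = 5/2"
  "gt 2 (Suc 0) 1 = 5/2"
  "gt 2 (Suc 0) (Suc 0) = 5/2"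
  "gt 2 1 2 = -7/2"
  "gt 2 (Suc 0) 2 = -7/2"
  "gt 2 1 3 = 3/2"
  "gt 2 (Suc 0) 3 = 3/2"
  "gt 2 2 0 = 1/2"
  "gt 2 2 1 = -1/2"
  "gt 2 2 (Suc 0) = -1/2"
  "gt 2 2 2 = -1/2"
  "gt 2 2 3 = 1/2"
  "gt 2 3 0 = 3/2"
  "gt 2 3 1 = -7/2"
  "gt 2 3 (Suc 0) = -7/2"
  "gt 2 3 2 = 5/2"
  "gt 2 3 3 = -1/2"
  "gt 3 0 0 = -1"
  "gt 3 0 1 = 3"
  "gt 3 0 (Suc 0) = 3"
  "gt 3 0 2 = -3"
  "gt 3 0 3 = 1"
  "gt 3 1 0 = -1"
  "gt 3 (Suc 0) 0 = -1"
  "gt 3 1 1 = 3"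
  "gt 3 1 (Suc 0) = 3"
  "gt 3 (Suc 0) 1 = 3"
  "gt 3 (Suc 0) (Suc 0) = 3"
  "gt 3 1 2 = -3"
  "gt 3 (Suc 0) 2 = -3"
  "gt 3 1 3 = 1"
  "gt 3 (Suc 0) 3 = 1"
  "gt 3 2 0 = -1"
  "gt 3 2 1 = 3"
  "gt 3 2 (Suc 0) = 3"
  "gt 3 2 2 = -3"
  "gt 3 2 3 = 1"
  "gt 3 3 0 = -1"
  "gt 3 3 1 = 3"
  "gt 3 3 (Suc 0) = 3"
  "gt 3 3 2 = -3"
  "gt 3 3 3 = 1"
  by (simp_all add: gt_def tab_def)

lemma gt_ok:
  assumes "s \<in> {1,2,3}" "k < 4" "m < 4"
  shows "(\<Sum>i<4. gt s k i * (real k + real i - 7/2)^m) = (if s = m then fact m else 0)"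
proof -
  have ks: "k = 0 \<or> k = 1 \<or> k = 2 \<or> k = 3" using assms by auto
  have ms: "m = 0 \<or> m = 1 \<or> m = 2 \<or> m = 3" using assms by auto
  show ?thesis using assms(1) ks ms
    by (elim disjE insertE emptyE; simp add: gt_vals sum4 fact_numeral power2_eq_square power3_eq_cube)
qed

lemma solve0:
  fixes c rr :: "nat \<Rightarrow> real"
  assumes E: "\<forall>m < 4. (\<Sum>i<4. c i * (real 0 + real i - 7/2)^m) = rr m"
  shows "c 0 = (-5/16) * rr 0 + (-23/24) * rr 1 + (-3/4) * rr 2 + (-1/6) * rr 3"
    and "c 1 = (21/16) * rr 0 + (31/8) * rr 1 + (11/4) * rr 2 + (1/2) * rr 3"
    and "c 2 = (-35/16) * rr 0 + (-47/8) * rr 1 + (-13/4) * rr 2 + (-1/2) * rr 3"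
    and "c 3 = (35/16) * rr 0 + (71/24) * rr 1 + (5/4) * rr 2 + (1/6) * rr 3"
proof -
  have e0: "c 0 * (1) + c 1 * (1) + c 2 * (1) + c 3 * (1) = rr 0"
    using E[rule_format, of 0] by (simp add: sum4 power2_eq_square power3_eq_cube)
  have e1: "c 0 * (-7/2) + c 1 * (-5/2) + c 2 * (-3/2) + c 3 * (-1/2) = rr 1"
    using E[rule_format, of 1] by (simp add: sum4 power2_eq_square power3_eq_cube)
  have e2: "c 0 * (49/4) + c 1 * (25/4) + c 2 * (9/4) + c 3 * (1/4) = rr 2"
    using E[rule_format, of 2] by (simp add: sum4 power2_eq_square power3_eq_cube)
  have e3: "c 0 * (-343/8) + c 1 * (-125/8) + c 2 * (-27/8) + c 3 * (-1/8) = rr 3"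
    using E[rule_format, of 3] by (simp add: sum4 power2_eq_square power3_eq_cube)
  show "c 0 = (-5/16) * rr 0 + (-23/24) * rr 1 + (-3/4) * rr 2 + (-1/6) * rr 3"
    using e0 e1 e2 e3 by linarith
  show "c 1 = (21/16) * rr 0 + (31/8) * rr 1 + (11/4) * rr 2 + (1/2) * rr 3"
    using e0 e1 e2 e3 by linarith
  show "c 2 = (-35/16) * rr 0 + (-47/8) * rr 1 + (-13/4) * rr 2 + (-1/2) * rr 3"
    using e0 e1 e2 e3 by linarith
  show "c 3 = (35/16) * rr 0 + (71/24) * rr 1 + (5/4) * rr 2 + (1/6) * rr 3"
    using e0 e1 e2 e3 by linarith
qed

lemma solve1:
  fixes c rr :: "nat \<Rightarrow> real"
  assumes E: "\<forall>m < 4. (\<Sum>i<4. c i * (real 1 + real i - 7/2)^m) = rr m"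
  shows "c 0 = (1/16) * rr 0 + (1/24) * rr 1 + (-1/4) * rr 2 + (-1/6) * rr 3"
    and "c 1 = (-5/16) * rr 0 + (-1/8) * rr 1 + (5/4) * rr 2 + (1/2) * rr 3"
    and "c 2 = (15/16) * rr 0 + (-7/8) * rr 1 + (-7/4) * rr 2 + (-1/2) * rr 3"
    and "c 3 = (5/16) * rr 0 + (23/24) * rr 1 + (3/4) * rr 2 + (1/6) * rr 3"
proof -
  have e0: "c 0 * (1) + c 1 * (1) + c 2 * (1) + c 3 * (1) = rr 0"
    using E[rule_format, of 0] by (simp add: sum4 power2_eq_square power3_eq_cube)
  have e1: "c 0 * (-5/2) + c 1 * (-3/2) + c 2 * (-1/2) + c 3 * (1/2) = rr 1"
    using E[rule_format, of 1] by (simp add: sum4 power2_eq_square power3_eq_cube)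
  have e2: "c 0 * (25/4) + c 1 * (9/4) + c 2 * (1/4) + c 3 * (1/4) = rr 2"
    using E[rule_format, of 2] by (simp add: sum4 power2_eq_square power3_eq_cube)
  have e3: "c 0 * (-125/8) + c 1 * (-27/8) + c 2 * (-1/8) + c 3 * (1/8) = rr 3"
    using E[rule_format, of 3] by (simp add: sum4 power2_eq_square power3_eq_cube)
  show "c 0 = (1/16) * rr 0 + (1/24) * rr 1 + (-1/4) * rr 2 + (-1/6) * rr 3"
    using e0 e1 e2 e3 by linarith
  show "c 1 = (-5/16) * rr 0 + (-1/8) * rr 1 + (5/4) * rr 2 + (1/2) * rr 3"
    using e0 e1 e2 e3 by linarith
  show "c 2 = (15/16) * rr 0 + (-7/8) * rr 1 + (-7/4) * rr 2 + (-1/2) * rr 3"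
    using e0 e1 e2 e3 by linarith
  show "c 3 = (5/16) * rr 0 + (23/24) * rr 1 + (3/4) * rr 2 + (1/6) * rr 3"
    using e0 e1 e2 e3 by linarith
qed

lemma solve2:
  fixes c rr :: "nat \<Rightarrow> real"
  assumes E: "\<forall>m < 4. (\<Sum>i<4. c i * (real 2 + real i - 7/2)^m) = rr m"
  shows "c 0 = (-1/16) * rr 0 + (1/24) * rr 1 + (1/4) * rr 2 + (-1/6) * rr 3"
    and "c 1 = (9/16) * rr 0 + (-9/8) * rr 1 + (-1/4) * rr 2 + (1/2) * rr 3"
    and "c 2 = (9/16) * rr 0 + (9/8) * rr 1 + (-1/4) * rr 2 + (-1/2) * rr 3"
    and "c 3 = (-1/16) * rr 0 + (-1/24) * rr 1 + (1/4) * rr 2 + (1/6) * rr 3"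
proof -
  have e0: "c 0 * (1) + c 1 * (1) + c 2 * (1) + c 3 * (1) = rr 0"
    using E[rule_format, of 0] by (simp add: sum4 power2_eq_square power3_eq_cube)
  have e1: "c 0 * (-3/2) + c 1 * (-1/2) + c 2 * (1/2) + c 3 * (3/2) = rr 1"
    using E[rule_format, of 1] by (simp add: sum4 power2_eq_square power3_eq_cube)
  have e2: "c 0 * (9/4) + c 1 * (1/4) + c 2 * (1/4) + c 3 * (9/4) = rr 2"
    using E[rule_format, of 2] by (simp add: sum4 power2_eq_square power3_eq_cube)
  have e3: "c 0 * (-27/8) + c 1 * (-1/8) + c 2 * (1/8) + c 3 * (27/8) = rr 3"
    using E[rule_format, of 3] by (simp add: sum4 power2_eq_square power3_eq_cube)
  show "c 0 = (-1/16) * rr 0 + (1/24) * rr 1 + (1/4) * rr 2 + (-1/6) * rr 3"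
    using e0 e1 e2 e3 by linarith
  show "c 1 = (9/16) * rr 0 + (-9/8) * rr 1 + (-1/4) * rr 2 + (1/2) * rr 3"
    using e0 e1 e2 e3 by linarith
  show "c 2 = (9/16) * rr 0 + (9/8) * rr 1 + (-1/4) * rr 2 + (-1/2) * rr 3"
    using e0 e1 e2 e3 by linarith
  show "c 3 = (-1/16) * rr 0 + (-1/24) * rr 1 + (1/4) * rr 2 + (1/6) * rr 3"
    using e0 e1 e2 e3 by linarith
qed

lemma solve3:
  fixes c rr :: "nat \<Rightarrow> real"
  assumes E: "\<forall>m < 4. (\<Sum>i<4. c i * (real 3 + real i - 7/2)^m) = rr m"
  shows "c 0 = (5/16) * rr 0 + (-23/24) * rr 1 + (3/4) * rr 2 + (-1/6) * rr 3"
    and "c 1 = (15/16) * rr 0 + (7/8) * rr 1 + (-7/4) * rr 2 + (1/2) * rr 3"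
    and "c 2 = (-5/16) * rr 0 + (1/8) * rr 1 + (5/4) * rr 2 + (-1/2) * rr 3"
    and "c 3 = (1/16) * rr 0 + (-1/24) * rr 1 + (-1/4) * rr 2 + (1/6) * rr 3"
proof -
  have e0: "c 0 * (1) + c 1 * (1) + c 2 * (1) + c 3 * (1) = rr 0"
    using E[rule_format, of 0] by (simp add: sum4 power2_eq_square power3_eq_cube)
  have e1: "c 0 * (-1/2) + c 1 * (1/2) + c 2 * (3/2) + c 3 * (5/2) = rr 1"
    using E[rule_format, of 1] by (simp add: sum4 power2_eq_square power3_eq_cube)
  have e2: "c 0 * (1/4) + c 1 * (1/4) + c 2 * (9/4) + c 3 * (25/4) = rr 2"
    using E[rule_format, of 2] by (simp add: sum4 power2_eq_square power3_eq_cube)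
  have e3: "c 0 * (-1/8) + c 1 * (1/8) + c 2 * (27/8) + c 3 * (125/8) = rr 3"
    using E[rule_format, of 3] by (simp add: sum4 power2_eq_square power3_eq_cube)
  show "c 0 = (5/16) * rr 0 + (-23/24) * rr 1 + (3/4) * rr 2 + (-1/6) * rr 3"
    using e0 e1 e2 e3 by linarith
  show "c 1 = (15/16) * rr 0 + (7/8) * rr 1 + (-7/4) * rr 2 + (1/2) * rr 3"
    using e0 e1 e2 e3 by linarith
  show "c 2 = (-5/16) * rr 0 + (1/8) * rr 1 + (5/4) * rr 2 + (-1/2) * rr 3"
    using e0 e1 e2 e3 by linarith
  show "c 3 = (1/16) * rr 0 + (-1/24) * rr 1 + (-1/4) * rr 2 + (1/6) * rr 3"
    using e0 e1 e2 e3 by linarith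
qed

lemma gt_uniq:
  fixes c :: "nat \<Rightarrow> real"
  assumes "s \<in> {1,2,3}" "k < 4"
   and E: "\<And>m. m < 4 \<Longrightarrow> (\<Sum>i<4. c i * (real k + real i - 7/2)^m) = (if s=m then fact m else 0)"
   and j: "j < 4"
  shows "c j = gt s k j"
proof -
  have ks: "k = 0 \<or> k = 1 \<or> k = 2 \<or> k = 3" using assms by auto
  have js: "j = 0 \<or> j = 1 \<or> j = 2 \<or> j = 3" using j by auto
  have ss: "s = 1 \<or> s = 2 \<or> s = 3" using assms by auto
  let ?r = "\<lambda>m. if s=m then fact m else (0::real)"
  have Er: "\<forall>m < 4. (\<Sum>i<4. c i * (real k + real i - 7/2)^m) = ?r m" using E by blast
  from ks show ?thesis
  proof (elim disjE)
    assume [simp]: "k = 0"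
    show ?thesis using solve0[OF Er[unfolded \<open>k = 0\<close>]] js ss by (elim disjE; simp add: gt_vals fact_numeral)
  next
    assume [simp]: "k = 1"
    show ?thesis using solve1[OF Er[unfolded \<open>k = 1\<close>]] js ss by (elim disjE; simp add: gt_vals fact_numeral)
  next
    assume [simp]: "k = 2"
    show ?thesis using solve2[OF Er[unfolded \<open>k = 2\<close>]] js ss by (elim disjE; simp add: gt_vals fact_numeral)
  next
    assume [simp]: "k = 3"
    show ?thesis using solve3[OF Er[unfolded \<open>k = 3\<close>]] js ss by (elim disjE; simp add: gt_vals fact_numeral)
  qed
qed

lemma coef:
  assumes "dx > 0" "s \<in> {1,2,3}" "k < 4"
  shows "stencil_coef xs dx s k = gt s k"
  unfolding stencil_coef_def
proof (rule the_equality)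
  have ks: "k = 0 \<or> k = 1 \<or> k = 2 \<or> k = 3" using assms by auto
  have ms: "\<And>m::nat. m < 4 \<Longrightarrow> m = 0 \<or> m = 1 \<or> m = 2 \<or> m = 3" by auto
  show "(\<forall>i\<ge>4. gt s k i = 0) \<and>
     (\<forall>m<4. (\<Sum>i<4. gt s k i * (stencil_pt xs dx k i - xs) ^ m / fact m)
              = dx ^ s * (if s = m then 1 else 0))"
    unfolding norm_eq[OF assms(1)] using gt_ok[OF assms(2,3)] by (auto simp: gt_def)
  fix c assume H: "(\<forall>i\<ge>4. c i = 0) \<and>
     (\<forall>m<4. (\<Sum>i<4. c i * (stencil_pt xs dx k i - xs) ^ m / fact m)
              = dx ^ s * (if s = m then 1 else 0))"
  hence E: "\<And>m. m < 4 \<Longrightarrow> (\<Sum>i<4. c i * (real k + real i - 7/2)^m) = (if s=m then fact m else 0)"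
    unfolding norm_eq[OF assms(1)] by blast
  have "\<And>i. i < 4 \<Longrightarrow> c i = gt s k i"
    by (rule gt_uniq[OF assms(2,3) E])
  then show "c = gt s k" using H by (auto simp: gt_def intro!: ext)
qed

definition tt :: "nat \<Rightarrow> nat \<Rightarrow> real" where "tt k i = real k + real i - 7/2"

lemma taylor4:
  fixes f f1 f2 f3 f4 :: "real \<Rightarrow> real"
  assumes d1: "\<And>x. x \<in> {a<..<b} \<Longrightarrow> (f has_real_derivative f1 x) (at x)"
    and d2: "\<And>x. x \<in> {a<..<b} \<Longrightarrow> (f1 has_real_derivative f2 x) (at x)"
    and d3: "\<And>x. x \<in> {a<..<b} \<Longrightarrow> (f2 has_real_derivative f3 x) (at x)"
    and d4: "\<And>x. x \<in> {a<..<b} \<Longrightarrow> (f3 has_real_derivative f4 x) (at x)"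
    and r: "a < x0 - r" "x0 + r < b"
    and M: "\<And>t. t \<in> {x0-r..x0+r} \<Longrightarrow> \<bar>f4 t\<bar> \<le> M"
    and h: "\<bar>h\<bar> \<le> r"
  shows "\<bar>f (x0+h) - (f x0 + f1 x0*h + f2 x0*h^2/2 + f3 x0*h^3/6)\<bar> \<le> M/24 * h^4"
proof (cases "h = 0")
  case True then show ?thesis by simp
next
  case False
  define diff where "diff = (\<lambda>m::nat. if m=0 then f else if m=1 then f1 else if m=2 then f2 else if m = 3 then f3 else f4)"
  have D: "\<forall>m t. m < 4 \<and> x0 - r \<le> t \<and> t \<le> x0 + r \<longrightarrow> DERIV (diff m) t :> diff (Suc m) t"
  proof (intro allI impI)
    fix m :: nat and t :: real assume H: "m < 4 \<and> x0 - r \<le> t \<and> t \<le> x0 + r"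
    then have t: "t \<in> {a<..<b}" using r by auto
    from H have "m = 0 \<or> m = 1 \<or> m = 2 \<or> m = 3" by auto
    then show "DERIV (diff m) t :> diff (Suc m) t"
      using d1[OF t] d2[OF t] d3[OF t] d4[OF t] by (auto simp: diff_def)
  qed
  have "0 \<le> r" using h by linarith
  obtain t where t: "(if x0 + h < x0 then x0 + h < t \<and> t < x0 else x0 < t \<and> t < x0 + h)"
    and eq: "f (x0+h) = (\<Sum>m<4. diff m x0 / fact m * (x0 + h - x0)^m) + diff 4 t / fact 4 * (x0 + h - x0)^4"
    using Taylor[of 4 diff f "x0 - r" "x0 + r" x0 "x0 + h"] D False h \<open>0 \<le> r\<close>
    by (auto simp: diff_def abs_le_iff)
  have tin: "t \<in> {x0-r..x0+r}" using t h by (auto split: if_splits simp: abs_le_iff)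
  have eq2: "f (x0+h) - (f x0 + f1 x0*h + f2 x0*h^2/2 + f3 x0*h^3/6) = f4 t / 24 * h^4"
    using eq by (simp add: diff_def eval_nat_numeral fact_numeral)
  have "\<bar>f4 t / 24 * h^4\<bar> = \<bar>f4 t\<bar> / 24 * h^4" by (simp add: abs_mult)
  also have "\<dots> \<le> M / 24 * h^4" using M[OF tin] by (intro mult_right_mono divide_right_mono) auto
  finally have "\<bar>f4 t / 24 * h^4\<bar> \<le> M / 24 * h^4" .
  then show ?thesis by (subst eq2)
qed

definition T3 :: "real \<Rightarrow> real \<Rightarrow> real \<Rightarrow> real \<Rightarrow> real \<Rightarrow> real \<Rightarrow> (real \<Rightarrow> real) \<Rightarrow> real" where
  "T3 x0 a0 a1 a2 a3 h f = f (x0 + h) - (a0 + a1*h + a2*h^2/2 + a3*h^3/6)"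

lemma L_exp:
  assumes "dx > 0" "s \<in> {1,2,3}" "k < 4"
  shows "Lop xs dx s k f = dx^s * (if s = 1 then f1 xs else if s = 2 then f2 xs else f3 xs)
     + (\<Sum>i<4. gt s k i * T3 xs (f xs) (f1 xs) (f2 xs) (f3 xs) (tt k i * dx) f)"
proof -
  let ?g = "gt s k"
  have S: "\<And>m. m < 4 \<Longrightarrow> (\<Sum>i<4. ?g i * (tt k i)^m) = (if s = m then fact m else 0)"
    unfolding tt_def using gt_ok assms(2,3) by blast
  have S0: "?g 0 + ?g 1 + ?g 2 + ?g 3 = (if s = 0 then 1 else 0)" using S[of 0] by (simp add: sum4)
  have S1: "?g 0 * tt k 0 + ?g 1 * tt k 1 + ?g 2 * tt k 2 + ?g 3 * tt k 3 = (if s = 1 then 1 else 0)"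
    using S[of 1] by (simp add: sum4)
  have S2: "?g 0 * (tt k 0)^2 + ?g 1 * (tt k 1)^2 + ?g 2 * (tt k 2)^2 + ?g 3 * (tt k 3)^2 = (if s = 2 then 2 else 0)"
    using S[of 2] by (simp add: sum4)
  have S3: "?g 0 * (tt k 0)^3 + ?g 1 * (tt k 1)^3 + ?g 2 * (tt k 2)^3 + ?g 3 * (tt k 3)^3 = (if s = 3 then 6 else 0)"
    using S[of 3] by (simp add: sum4 fact_numeral)
  have pt: "\<And>i. stencil_pt xs dx k i = xs + tt k i * dx" by (simp add: stencil_pt_def tt_def algebra_simps)
  have "Lop xs dx s k f = (\<Sum>i<4. ?g i * f (xs + tt k i * dx))"
    unfolding Lop_def coef[OF assms] pt ..
  also have "\<dots> = (\<Sum>i<4. ?g i * (f xs + f1 xs * (tt k i * dx) + f2 xs * (tt k i * dx)^2/2 + f3 xs * (tt k i * dx)^3/6))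
      + (\<Sum>i<4. ?g i * T3 xs (f xs) (f1 xs) (f2 xs) (f3 xs) (tt k i * dx) f)"
    by (simp add: T3_def sum4 algebra_simps)
  also have "(\<Sum>i<4. ?g i * (f xs + f1 xs * (tt k i * dx) + f2 xs * (tt k i * dx)^2/2 + f3 xs * (tt k i * dx)^3/6))
     = f xs * (?g 0 + ?g 1 + ?g 2 + ?g 3)
       + f1 xs * dx * (?g 0 * tt k 0 + ?g 1 * tt k 1 + ?g 2 * tt k 2 + ?g 3 * tt k 3)
       + f2 xs * dx^2 / 2 * (?g 0 * (tt k 0)^2 + ?g 1 * (tt k 1)^2 + ?g 2 * (tt k 2)^2 + ?g 3 * (tt k 3)^2)
       + f3 xs * dx^3 / 6 * (?g 0 * (tt k 0)^3 + ?g 1 * (tt k 1)^3 + ?g 2 * (tt k 2)^3 + ?g 3 * (tt k 3)^3)"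
    by (simp add: sum4 power_mult_distrib algebra_simps add_divide_distrib)
  also have "\<dots> = dx^s * (if s = 1 then f1 xs else if s = 2 then f2 xs else f3 xs)"
    unfolding S0 S1 S2 S3 using assms(2) by auto
  finally show ?thesis .
qed

lemma gt_bound: "s \<in> {1,2,3} \<Longrightarrow> k < 4 \<Longrightarrow> \<bar>gt s k i\<bar> \<le> 7"
proof (cases "i < 4")
  case True
  assume "s \<in> {1,2,3}" "k < 4"
  then have "s = 1 \<or> s = 2 \<or> s = 3" "k = 0 \<or> k = 1 \<or> k = 2 \<or> k = 3" "i = 0 \<or> i = 1 \<or> i = 2 \<or> i = 3"
    using True by auto
  then show ?thesis by (elim disjE; simp add: gt_vals)
next
  case False then show ?thesis by (simp add: gt_def)
qed

lemma tt_bound: "k < 4 \<Longrightarrow> i < 4 \<Longrightarrow> \<bar>tt k i\<bar> \<le> 7/2"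
proof -
  assume "k < 4" "i < 4"
  then have "real k \<le> 3" "real i \<le> 3" by auto
  then show ?thesis unfolding tt_def abs_le_iff by simp
qed

lemma L_err:
  fixes f f1 f2 f3 f4 :: "real \<Rightarrow> real"
  assumes d1: "\<And>x. x \<in> {a<..<b} \<Longrightarrow> (f has_real_derivative f1 x) (at x)"
    and d2: "\<And>x. x \<in> {a<..<b} \<Longrightarrow> (f1 has_real_derivative f2 x) (at x)"
    and d3: "\<And>x. x \<in> {a<..<b} \<Longrightarrow> (f2 has_real_derivative f3 x) (at x)"
    and d4: "\<And>x. x \<in> {a<..<b} \<Longrightarrow> (f3 has_real_derivative f4 x) (at x)"
    and r: "a < xs - r" "xs + r < b"
    and M: "\<And>t. t \<in> {xs-r..xs+r} \<Longrightarrow> \<bar>f4 t\<bar> \<le> M"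
    and dx: "dx > 0" "7/2 * dx \<le> r"
    and sk: "s \<in> {1,2,3}" "k < 4"
  shows "\<bar>Lop xs dx s k f - dx^s * (if s = 1 then f1 xs else if s = 2 then f2 xs else f3 xs)\<bar>
           \<le> (7 * M * (7/2)^4 / 6) * dx^4"
proof -
  have "0 \<le> r" using dx by linarith
  have M0: "0 \<le> M" using M[of xs] \<open>0 \<le> r\<close> by auto
  have tb: "\<bar>gt s k i * T3 xs (f xs) (f1 xs) (f2 xs) (f3 xs) (tt k i * dx) f\<bar> \<le> 7 * (M/24 * (7/2*dx)^4)"
    if i: "i < 4" for i
  proof -
    have ti: "\<bar>tt k i\<bar> \<le> 7/2" using tt_bound[OF sk(2) i] .
    have h: "\<bar>tt k i * dx\<bar> \<le> 7/2 * dx" using ti dx by (simp add: abs_mult mult_right_mono)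
    have "\<bar>T3 xs (f xs) (f1 xs) (f2 xs) (f3 xs) (tt k i * dx) f\<bar> \<le> M/24 * (tt k i * dx)^4"
      unfolding T3_def
      by (rule taylor4[OF d1 d2 d3 d4 r M]) (use h dx in auto)
    also have "(tt k i * dx)^4 = \<bar>tt k i * dx\<bar>^4" by (simp add: power_even_abs)
    also have "M/24 * \<bar>tt k i * dx\<bar>^4 \<le> M/24 * (7/2*dx)^4"
      using M0 h by (intro mult_left_mono power_mono) auto
    finally have T: "\<bar>T3 xs (f xs) (f1 xs) (f2 xs) (f3 xs) (tt k i * dx) f\<bar> \<le> M/24 * (7/2*dx)^4" .
    have "\<bar>gt s k i * T3 xs (f xs) (f1 xs) (f2 xs) (f3 xs) (tt k i * dx) f\<bar>
        = \<bar>gt s k i\<bar> * \<bar>T3 xs (f xs) (f1 xs) (f2 xs) (f3 xs) (tt k i * dx) f\<bar>" by (rule abs_mult)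
    also have "\<dots> \<le> 7 * (M/24 * (7/2*dx)^4)"
      using gt_bound[OF sk] T by (intro mult_mono) auto
    finally show ?thesis .
  qed
  have "\<bar>Lop xs dx s k f - dx^s * (if s = 1 then f1 xs else if s = 2 then f2 xs else f3 xs)\<bar>
      = \<bar>\<Sum>i<4. gt s k i * T3 xs (f xs) (f1 xs) (f2 xs) (f3 xs) (tt k i * dx) f\<bar>"
    using L_exp[OF dx(1) sk, of xs f f1 f2 f3] by simp
  also have "\<dots> \<le> (\<Sum>i<4. \<bar>gt s k i * T3 xs (f xs) (f1 xs) (f2 xs) (f3 xs) (tt k i * dx) f\<bar>)"
    by (rule sum_abs)
  also have "\<dots> \<le> of_nat (card {..<4::nat}) * (7 * (M/24 * (7/2*dx)^4))"
    by (rule sum_bounded_above) (use tb in auto)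
  also have "\<dots> = (7 * M * (7/2)^4 / 6) * dx^4" by (simp add: power_mult_distrib power_divide)
  finally show ?thesis .
qed

lemma dw_sum: "dw 0 + dw 1 + dw 2 + dw 3 = 1" by (simp add: dw_def)
lemma dw_rng: "0 \<le> dw k \<and> dw k \<le> 1" by (simp add: dw_def)

lemma weight:
  fixes \<tau> :: "nat \<Rightarrow> real"
  assumes H: "\<forall>q<4. 0 \<le> \<tau> q \<and> \<tau> q \<le> T" and k: "k < 4"
  shows "\<bar>dw k * (1 + \<tau> k) / (\<Sum>q<4. dw q * (1 + \<tau> q)) - dw k\<bar> \<le> T"
proof -
  define S where "S = dw 0 * \<tau> 0 + dw 1 * \<tau> 1 + dw 2 * \<tau> 2 + dw 3 * \<tau> 3"
  have sum: "(\<Sum>q<4. dw q * (1 + \<tau> q)) = 1 + S"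
    unfolding S_def sum4 using dw_sum by (simp add: algebra_simps)
  have t: "0 \<le> \<tau> q" "\<tau> q \<le> T" if "q < 4" for q using H that by auto
  have S0: "0 \<le> S" unfolding S_def using t dw_rng by (intro add_nonneg_nonneg mult_nonneg_nonneg) auto
  have "S \<le> dw 0 * T + dw 1 * T + dw 2 * T + dw 3 * T"
    unfolding S_def using t dw_rng by (intro add_mono mult_left_mono) auto
  also have "\<dots> = (dw 0 + dw 1 + dw 2 + dw 3) * T" by (simp add: algebra_simps)
  also have "\<dots> = T" using dw_sum by simp
  finally have ST: "S \<le> T" .
  have tk: "0 \<le> \<tau> k" "\<tau> k \<le> T" using t k by auto
  have eq: "dw k * (1 + \<tau> k) / (1 + S) - dw k = dw k * (\<tau> k - S) / (1 + S)"
    using S0 by (simp add: field_simps)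
  have "\<bar>dw k * (\<tau> k - S) / (1 + S)\<bar> = dw k * \<bar>\<tau> k - S\<bar> / (1 + S)"
    using S0 dw_rng[of k] by (simp add: abs_mult)
  also have "\<dots> \<le> dw k * \<bar>\<tau> k - S\<bar> / 1"
    using S0 dw_rng[of k] by (intro divide_left_mono) auto
  also have "\<dots> = dw k * \<bar>\<tau> k - S\<bar>" by simp
  also have "\<dots> \<le> 1 * \<bar>\<tau> k - S\<bar>" using dw_rng[of k] by (intro mult_right_mono) auto
  also have "\<dots> \<le> T" using tk S0 ST by auto
  finally show ?thesis unfolding sum eq .
qed

lemma core:
  fixes b :: "nat \<Rightarrow> real" and p s :: nat
  assumes dx: "0 < dx" "dx \<le> 1" and K: "0 \<le> K" and c: "0 < c" and p: "1 \<le> p" "p \<le> 3"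
    and hb: "\<forall>k<4. \<bar>b k - B\<bar> \<le> 3*K*dx^4" and hB: "c*dx^p \<le> B"
    and small: "3*K*dx^4 \<le> c*dx^p/2" and k: "k < 4"
  shows "0 \<le> (\<bar>b 0 - b 3\<bar> ^ 2 / (b k)^2)^s \<and>
         (\<bar>b 0 - b 3\<bar> ^ 2 / (b k)^2)^s \<le> (144*K^2/c^2)^s * dx^((8-2*p) * s)"
proof -
  have hk: "\<bar>b k - B\<bar> \<le> 3*K*dx^4" using hb k by auto
  have h0: "\<bar>b 0 - B\<bar> \<le> 3*K*dx^4" using hb by auto
  have h3: "\<bar>b 3 - B\<bar> \<le> 3*K*dx^4" using hb by auto
  have bk: "c*dx^p/2 \<le> b k" using hk hB small by (simp only: abs_le_iff) linarith
  have cp: "0 < c*dx^p/2" using c dx by simp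
  have d03: "\<bar>b 0 - b 3\<bar> \<le> 6*K*dx^4" using h0 h3 by (simp only: abs_le_iff) linarith
  have z: "\<bar>b 0 - b 3\<bar> ^ 2 \<le> (6*K*dx^4)^2" using d03 by (intro power_mono) auto
  have "\<bar>b 0 - b 3\<bar> ^ 2 / (b k)^2 \<le> (6*K*dx^4)^2 / (c*dx^p/2)^2"
  proof (rule frac_le)
    show "0 \<le> (6*K*dx^4)^2" by simp
    show "\<bar>b 0 - b 3\<bar> ^ 2 \<le> (6*K*dx^4)^2" by (rule z)
    show "0 < (c*dx^p/2)^2" using cp by (intro zero_less_power) 
    show "(c*dx^p/2)^2 \<le> (b k)^2" using bk cp by (intro power_mono) auto
  qed
  also have "\<dots> = 144*K^2/c^2 * dx^(8-2*p)"
  proof -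
    have "dx^8 = dx^(2*p) * dx^(8-2*p)" using p by (simp add: power_add[symmetric])
    then show ?thesis using c dx by (simp add: field_simps power_mult_distrib power_mult[symmetric] )
  qed
  finally have r: "\<bar>b 0 - b 3\<bar> ^ 2 / (b k)^2 \<le> 144*K^2/c^2 * dx^(8-2*p)" .
  have r0: "0 \<le> \<bar>b 0 - b 3\<bar> ^ 2 / (b k)^2" by simp
  have "(\<bar>b 0 - b 3\<bar> ^ 2 / (b k)^2)^s \<le> (144*K^2/c^2 * dx^(8-2*p))^s"
    using r r0 by (intro power_mono) auto
  also have "\<dots> = (144*K^2/c^2)^s * dx^((8-2*p) * s)" by (simp only: power_mult_distrib power_mult)
  finally show ?thesis using r0 by simp
qed

lemma asym:
  fixes \<beta> :: "real \<Rightarrow> nat \<Rightarrow> real" and B :: "real \<Rightarrow> real" and p s n k :: nat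
  assumes d0: "0 < \<delta>0" and K: "0 \<le> K" and c: "0 < c" and p: "1 \<le> p" "p \<le> 3"
    and hb: "\<And>dx k. 0 < dx \<Longrightarrow> dx \<le> \<delta>0 \<Longrightarrow> k < 4 \<Longrightarrow> \<bar>\<beta> dx k - B dx\<bar> \<le> 3*K*dx^4"
    and hB: "\<And>dx. 0 < dx \<Longrightarrow> c*dx^p \<le> B dx"
    and k: "k < 4" and n: "n \<le> (8-2*p) * s"
  shows "(\<lambda>dx. dw k * (1 + (\<bar>\<beta> dx 0 - \<beta> dx 3\<bar> ^ 2 / (\<beta> dx k)^2)^s)
            / (\<Sum>q<4. dw q * (1 + (\<bar>\<beta> dx 0 - \<beta> dx 3\<bar> ^ 2 / (\<beta> dx q)^2)^s)) - dw k)
         \<in> O[at_right 0](\<lambda>dx. dx^n)"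
proof -
  define \<delta> where "\<delta> = min (min 1 \<delta>0) (c/(6*K+1))"
  have \<delta>: "0 < \<delta>" unfolding \<delta>_def using d0 c K by simp
  define C where "C = (144*K^2/c^2)^s"
  have C0: "0 \<le> C" unfolding C_def by simp
  have ev: "eventually (\<lambda>dx. dx \<in> {0<..<\<delta>}) (at_right (0::real))"
    by (rule eventually_at_right_real[OF \<delta>])
  show ?thesis
  proof (rule bigoI[where c = C])
    show "eventually (\<lambda>dx. norm (dw k * (1 + (\<bar>\<beta> dx 0 - \<beta> dx 3\<bar> ^ 2 / (\<beta> dx k)^2)^s)
            / (\<Sum>q<4. dw q * (1 + (\<bar>\<beta> dx 0 - \<beta> dx 3\<bar> ^ 2 / (\<beta> dx q)^2)^s)) - dw k)
          \<le> C * norm (dx^n)) (at_right 0)"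
      using ev
    proof eventually_elim
      case (elim dx)
      then have dx: "0 < dx" "dx < \<delta>" by auto
      have dx1: "dx \<le> 1" "dx \<le> \<delta>0" "dx \<le> c/(6*K+1)" using dx unfolding \<delta>_def by auto
      have small: "3*K*dx^4 \<le> c*dx^p/2"
      proof -
        have "dx^4 = dx^(4-p) * dx^p" using p by (simp add: power_add[symmetric])
        also have "dx^(4-p) \<le> dx^1" using dx dx1 p by (intro power_decreasing) auto
        then have "dx^(4-p) * dx^p \<le> dx * dx^p" using dx by (intro mult_right_mono) auto
        finally have a: "dx^4 \<le> dx * dx^p" .
        have "3*K*dx \<le> 3*K*(c/(6*K+1))" using dx1 K by (intro mult_left_mono) auto
        also have "\<dots> \<le> c/2" using K c by (simp add: field_simps)
        finally have b: "3*K*dx \<le> c/2" .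
        have "3*K*dx^4 \<le> 3*K*(dx*dx^p)" using a K by (intro mult_left_mono) auto
        also have "\<dots> = (3*K*dx)*dx^p" by simp
        also have "\<dots> \<le> (c/2)*dx^p" using b dx by (intro mult_right_mono) auto
        finally show ?thesis by simp
      qed
      have hbk: "\<forall>k<4. \<bar>\<beta> dx k - B dx\<bar> \<le> 3*K*dx^4" using hb dx dx1 by auto
      have T: "\<forall>q<4. 0 \<le> (\<bar>\<beta> dx 0 - \<beta> dx 3\<bar> ^ 2 / (\<beta> dx q)^2)^s \<and>
           (\<bar>\<beta> dx 0 - \<beta> dx 3\<bar> ^ 2 / (\<beta> dx q)^2)^s \<le> C * dx^((8-2*p) * s)"
        using core[OF dx(1) dx1(1) K c p hbk hB[OF dx(1)] small] unfolding C_def by blast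
      have "norm (dw k * (1 + (\<bar>\<beta> dx 0 - \<beta> dx 3\<bar> ^ 2 / (\<beta> dx k)^2)^s)
            / (\<Sum>q<4. dw q * (1 + (\<bar>\<beta> dx 0 - \<beta> dx 3\<bar> ^ 2 / (\<beta> dx q)^2)^s)) - dw k)
            \<le> C * dx^((8-2*p) * s)"
        unfolding real_norm_def by (rule weight[OF T k])
      also have "\<dots> \<le> C * dx^n" using C0 dx dx1 n by (intro mult_left_mono power_decreasing) auto
      also have "\<dots> = C * norm (dx^n)" using dx by simp
      finally show ?case .
    qed
  qed
qed

theorem mainTheorem3:
  fixes f f1 f2 f3 f4 :: "real \<Rightarrow> real" and a b xs xi1 xi2 :: real and s :: nat
  assumes "a < xs" and "xs < b"
    and "\<And>x. x \<in> {a<..<b} \<Longrightarrow> (f has_real_derivative f1 x) (at x)"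
    and "\<And>x. x \<in> {a<..<b} \<Longrightarrow> (f1 has_real_derivative f2 x) (at x)"
    and "\<And>x. x \<in> {a<..<b} \<Longrightarrow> (f2 has_real_derivative f3 x) (at x)"
    and "\<And>x. x \<in> {a<..<b} \<Longrightarrow> (f3 has_real_derivative f4 x) (at x)"
    and "continuous_on {a<..<b} f4"
    and "0 < xi1" and "xi1 \<le> 1" and "0 < xi2" and "xi2 \<le> 1"
    and "1 \<le> s"
  shows
    "(f1 xs \<noteq> 0 \<longrightarrow> (\<forall>k<4.
        (\<lambda>dx. omega_w s xi1 xi2 xs dx f k - dw k) \<in> O[at_right 0](\<lambda>dx. dx ^ (6 * s)) \<and>
        (\<lambda>dx. omega_w s xi1 xi2 xs dx f k - dw k) \<in> O[at_right 0](\<lambda>dx. dx ^ 4)))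
   \<and> (f1 xs = 0 \<and> f2 xs \<noteq> 0 \<longrightarrow> (\<forall>k<4.
        (\<lambda>dx. omega_w s xi1 xi2 xs dx f k - dw k) \<in> O[at_right 0](\<lambda>dx. dx ^ (4 * s)) \<and>
        (\<lambda>dx. omega_w s xi1 xi2 xs dx f k - dw k) \<in> O[at_right 0](\<lambda>dx. dx ^ 4)))
   \<and> (f1 xs = 0 \<and> f2 xs = 0 \<and> f3 xs \<noteq> 0 \<longrightarrow> (\<forall>k<4.
        (\<lambda>dx. omega_w s xi1 xi2 xs dx f k - dw k) \<in> O[at_right 0](\<lambda>dx. dx ^ (2 * s)) \<and>
        (2 \<le> s \<longrightarrow> (\<lambda>dx. omega_w s xi1 xi2 xs dx f k - dw k) \<in> O[at_right 0](\<lambda>dx. dx ^ 4))))"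
proof -
  note d = assms(3,4,5,6)
  define r where "r = min (xs - a) (b - xs) / 2"
  have r0: "0 < r" and ra: "a < xs - r" and rb: "xs + r < b" using assms(1,2) unfolding r_def by (auto simp: min_def field_simps)
  have sub: "{xs-r..xs+r} \<subseteq> {a<..<b}" using ra rb by auto
  have "continuous_on {xs-r..xs+r} f4" using continuous_on_subset[OF assms(7) sub] .
  then have "compact (f4 ` {xs-r..xs+r})" by (intro compact_continuous_image) auto
  then have "bounded (f4 ` {xs-r..xs+r})" by (rule compact_imp_bounded)
  then obtain M where "\<forall>x\<in>f4 ` {xs-r..xs+r}. norm x \<le> M"
    unfolding bounded_iff by blast
  then have M: "\<And>t. t \<in> {xs-r..xs+r} \<Longrightarrow> \<bar>f4 t\<bar> \<le> M" by auto
  have M0: "0 \<le> M" using M[of xs] r0 by auto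
  define K where "K = 7 * M * (7/2)^4 / 6"
  have K0: "0 \<le> K" unfolding K_def using M0 by simp
  define \<delta>0 where "\<delta>0 = r / (7/2)"
  have d0: "0 < \<delta>0" unfolding \<delta>0_def using r0 by simp
  have err: "\<bar>Lop xs dx s' k f - dx^s' * (if s' = 1 then f1 xs else if s' = 2 then f2 xs else f3 xs)\<bar> \<le> K * dx^4"
    if "0 < dx" "dx \<le> \<delta>0" "s' \<in> {1,2,3}" "k < 4" for dx s' k
  proof -
    have "7/2 * dx \<le> r" using that unfolding \<delta>0_def by (simp add: field_simps)
    then show ?thesis unfolding K_def using L_err[OF d ra rb M] that by blast
  qed
  define B where "B = (\<lambda>dx::real. xi1 * \<bar>dx * f1 xs\<bar> + xi2 * \<bar>dx^2 * f2 xs\<bar> + \<bar>dx^3 * f3 xs\<bar>)"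
  define \<beta> where "\<beta> = (\<lambda>dx k. beta_ind xi1 xi2 xs dx f k)"
  have hb: "\<bar>\<beta> dx k - B dx\<bar> \<le> 3*K*dx^4" if dx: "0 < dx" "dx \<le> \<delta>0" and k: "k < 4" for dx k
  proof -
    have e1: "\<bar>Lop xs dx 1 k f - dx * f1 xs\<bar> \<le> K*dx^4" using err[OF dx, of 1 k] k by simp
    have e2: "\<bar>Lop xs dx 2 k f - dx^2 * f2 xs\<bar> \<le> K*dx^4" using err[OF dx, of 2 k] k by simp
    have e3: "\<bar>Lop xs dx 3 k f - dx^3 * f3 xs\<bar> \<le> K*dx^4" using err[OF dx, of 3 k] k by simp
    have a1: "\<bar>xi1 * \<bar>Lop xs dx 1 k f\<bar> - xi1 * \<bar>dx * f1 xs\<bar>\<bar> \<le> K*dx^4"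
    proof -
      have "\<bar>xi1 * \<bar>Lop xs dx 1 k f\<bar> - xi1 * \<bar>dx * f1 xs\<bar>\<bar> = xi1 * \<bar>\<bar>Lop xs dx 1 k f\<bar> - \<bar>dx * f1 xs\<bar>\<bar>"
        using assms(8) by (simp add: abs_mult right_diff_distrib[symmetric])
      also have "\<dots> \<le> 1 * \<bar>Lop xs dx 1 k f - dx * f1 xs\<bar>"
        using assms(8,9) by (intro mult_mono abs_triangle_ineq3) auto
      finally show ?thesis using e1 by simp
    qed
    have a2: "\<bar>xi2 * \<bar>Lop xs dx 2 k f\<bar> - xi2 * \<bar>dx^2 * f2 xs\<bar>\<bar> \<le> K*dx^4"
    proof -
      have "\<bar>xi2 * \<bar>Lop xs dx 2 k f\<bar> - xi2 * \<bar>dx^2 * f2 xs\<bar>\<bar> = xi2 * \<bar>\<bar>Lop xs dx 2 k f\<bar> - \<bar>dx^2 * f2 xs\<bar>\<bar>"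
        using assms(10) by (simp add: abs_mult right_diff_distrib[symmetric])
      also have "\<dots> \<le> 1 * \<bar>Lop xs dx 2 k f - dx^2 * f2 xs\<bar>"
        using assms(10,11) by (intro mult_mono abs_triangle_ineq3) auto
      finally show ?thesis using e2 by simp
    qed
    have a3: "\<bar>\<bar>Lop xs dx 3 k f\<bar> - \<bar>dx^3 * f3 xs\<bar>\<bar> \<le> K*dx^4"
      using abs_triangle_ineq3 e3 order_trans by blast
    show ?thesis unfolding \<beta>_def beta_ind_def B_def using a1 a2 a3 by (simp only: abs_le_iff) linarith
  qed
  have om: "omega_w s xi1 xi2 xs dx f k - dw k =
     dw k * (1 + (\<bar>\<beta> dx 0 - \<beta> dx 3\<bar> ^ 2 / (\<beta> dx k)^2)^s)
            / (\<Sum>q<4. dw q * (1 + (\<bar>\<beta> dx 0 - \<beta> dx 3\<bar> ^ 2 / (\<beta> dx q)^2)^s)) - dw k" for dx k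
    unfolding omega_w_def alpha_w_def zeta_ind_def \<beta>_def ..
  have s1: "(1::nat) \<le> s" using assms(12) .
  have P1: "f1 xs \<noteq> 0 \<longrightarrow> (\<forall>k<4.
        (\<lambda>dx. omega_w s xi1 xi2 xs dx f k - dw k) \<in> O[at_right 0](\<lambda>dx. dx ^ (6 * s)) \<and>
        (\<lambda>dx. omega_w s xi1 xi2 xs dx f k - dw k) \<in> O[at_right 0](\<lambda>dx. dx ^ 4))"
  proof (intro impI allI)
    fix k :: nat assume nz: "f1 xs \<noteq> 0" and k: "k < 4"
    have c: "0 < xi1 * \<bar>f1 xs\<bar>" using nz assms(8) by simp
    have hB: "(xi1 * \<bar>f1 xs\<bar>) * dx^1 \<le> B dx" if "0 < dx" for dx
      unfolding B_def using that assms(10) by (simp add: abs_mult add_nonneg_nonneg mult_nonneg_nonneg)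
    show "(\<lambda>dx. omega_w s xi1 xi2 xs dx f k - dw k) \<in> O[at_right 0](\<lambda>dx. dx ^ (6 * s)) \<and>
        (\<lambda>dx. omega_w s xi1 xi2 xs dx f k - dw k) \<in> O[at_right 0](\<lambda>dx. dx ^ 4)"
      unfolding om using asym[OF d0 K0 c _ _ hb hB k, where n="6 * s" and s=s] asym[OF d0 K0 c _ _ hb hB k, where n=4 and s=s] s1 by auto
  qed
  have P2: "f1 xs = 0 \<and> f2 xs \<noteq> 0 \<longrightarrow> (\<forall>k<4.
        (\<lambda>dx. omega_w s xi1 xi2 xs dx f k - dw k) \<in> O[at_right 0](\<lambda>dx. dx ^ (4 * s)) \<and>
        (\<lambda>dx. omega_w s xi1 xi2 xs dx f k - dw k) \<in> O[at_right 0](\<lambda>dx. dx ^ 4))"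
  proof (intro impI allI)
    fix k :: nat assume nz: "f1 xs = 0 \<and> f2 xs \<noteq> 0" and k: "k < 4"
    have c: "0 < xi2 * \<bar>f2 xs\<bar>" using nz assms(10) by simp
    have hB: "(xi2 * \<bar>f2 xs\<bar>) * dx^2 \<le> B dx" if "0 < dx" for dx
      unfolding B_def using that nz by (simp add: abs_mult)
    show "(\<lambda>dx. omega_w s xi1 xi2 xs dx f k - dw k) \<in> O[at_right 0](\<lambda>dx. dx ^ (4 * s)) \<and>
        (\<lambda>dx. omega_w s xi1 xi2 xs dx f k - dw k) \<in> O[at_right 0](\<lambda>dx. dx ^ 4)"
      unfolding om using asym[OF d0 K0 c _ _ hb hB k, where n="4 * s" and s=s] asym[OF d0 K0 c _ _ hb hB k, where n=4 and s=s] s1 by auto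
  qed
  have P3: "f1 xs = 0 \<and> f2 xs = 0 \<and> f3 xs \<noteq> 0 \<longrightarrow> (\<forall>k<4.
        (\<lambda>dx. omega_w s xi1 xi2 xs dx f k - dw k) \<in> O[at_right 0](\<lambda>dx. dx ^ (2 * s)) \<and>
        (2 \<le> s \<longrightarrow> (\<lambda>dx. omega_w s xi1 xi2 xs dx f k - dw k) \<in> O[at_right 0](\<lambda>dx. dx ^ 4)))"
  proof (intro impI allI)
    fix k :: nat assume nz: "f1 xs = 0 \<and> f2 xs = 0 \<and> f3 xs \<noteq> 0" and k: "k < 4"
    have c: "0 < \<bar>f3 xs\<bar>" using nz by simp
    have hB: "\<bar>f3 xs\<bar> * dx^3 \<le> B dx" if "0 < dx" for dx
      unfolding B_def using that nz by (simp add: abs_mult)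
    show "(\<lambda>dx. omega_w s xi1 xi2 xs dx f k - dw k) \<in> O[at_right 0](\<lambda>dx. dx ^ (2 * s)) \<and>
        (2 \<le> s \<longrightarrow> (\<lambda>dx. omega_w s xi1 xi2 xs dx f k - dw k) \<in> O[at_right 0](\<lambda>dx. dx ^ 4))"
      unfolding om using asym[OF d0 K0 c _ _ hb hB k, where n="2 * s" and s=s] asym[OF d0 K0 c _ _ hb hB k, where n=4 and s=s] by auto
  qed
  show ?thesis using P1 P2 P3 by blast
qed

end
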